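(* Let $A$ be a random variable with values in $\{u,v\}$, $\mathbb{P}(A=u)=p_u$, $\mathbb{P}(A=v)=p_v$, $p_u+p_v=1$, and let $(U,V)$ be a random vector independent of $A$ that is bivariate normal with $\mathbb{E}[U]=\mathbb{E}[V]=\mu<0$, $\operatorname{Var}(U)=\operatorname{Var}(V)=\sigma^2$ with $\sigma>0$, and correlation $\rho$. For $z\in\mathbb{R}$ define \[f(z)=\mathbb{P}(A=u)\,\mathbb{P}(U>z)\,\mathbb{E}[U+V\mid U>z]+\mathbb{P}(A=v)\,\mathbb{P}(V>z)\,\mathbb{E}[U+V\mid V>z]\] (equivalently $f(z)=\mathbb{E}[D(U+V)]$ with $D=\mathbb{I}(A=u,U>z)+\mathbb{I}(A=v,V>z)$). If $\rho\in(-1,1)$, then $f'(0)>0$, $f$ attains its maximum at \[z^*=\frac{\rho-1}{\rho+1}\,\mu,\] and $f(z^* )>0$.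
   Context: $z$ is a hurdle rate: an innovation is adopted iff its effect on the primary dimension $A$ exceeds $z$. $f(z)$ is the long-run average overall performance of the firm under this rule. *)

theory Defs
  imports "HOL-Probability.Probability"
begin

definition bvn_density :: "real \<Rightarrow> real \<Rightarrow> real \<Rightarrow> real \<times> real \<Rightarrow> real" where
  "bvn_density mu sig rho = (\<lambda>(a, b).
     exp (- (((a - mu)^2 - 2 * rho * (a - mu) * (b - mu) + (b - mu)^2)
             / (2 * sig^2 * (1 - rho^2))))
     / (2 * pi * sig^2 * sqrt (1 - rho^2)))"

definition cond_exp_event :: "'a measure \<Rightarrow> ('a \<Rightarrow> real) \<Rightarrow> 'a set \<Rightarrow> real" where
  "cond_exp_event M X B = (\<integral>x. indicator B x * X x \<partial>M) / measure M B"

definition hurdle_perf ::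
  "'a measure \<Rightarrow> ('a \<Rightarrow> 'b) \<Rightarrow> ('a \<Rightarrow> real) \<Rightarrow> ('a \<Rightarrow> real) \<Rightarrow> 'b \<Rightarrow> 'b \<Rightarrow> real \<Rightarrow> real" where
  "hurdle_perf M A U V u v z =
     measure M {x \<in> space M. A x = u} * measure M {x \<in> space M. U x > z}
       * cond_exp_event M (\<lambda>x. U x + V x) {x \<in> space M. U x > z}
   + measure M {x \<in> space M. A x = v} * measure M {x \<in> space M. V x > z}
       * cond_exp_event M (\<lambda>x. U x + V x) {x \<in> space M. V x > z}"

end

theory Submission
  imports Defs
begin

lemma bvn_sym: "bvn_density mu sig rho (a,b) = bvn_density mu sig rho (b,a)"
  unfolding bvn_density_def by (simp add: algebra_simps)

lemma bvn_factor:
  fixes mu sig rho a b :: real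
  assumes s: "sig > 0" and r1: "-1 < rho" and r2: "rho < 1"
  shows "bvn_density mu sig rho (a,b) =
     normal_density mu sig a * normal_density (mu + rho*(a-mu)) (sig * sqrt(1-rho^2)) b"
proof -
  have q: "1 - rho^2 > 0" using r1 r2 by (simp add: abs_square_less_1 abs_less_iff)
  define t where "t = sqrt (1-rho^2)"
  have t: "t > 0" "t^2 = 1 - rho^2" using q by (auto simp: t_def)
  have st: "(sig*t)^2 = sig^2*(1-rho^2)" using t by (simp add: power_mult_distrib)
  have c1: "sqrt (2*pi * sig^2) = sqrt(2*pi) * sig" using s by (simp add: real_sqrt_mult)
  have c2: "sqrt (2*pi*(sig*t)^2) = sqrt(2*pi) * (sig * t)" using s t by (simp add: real_sqrt_mult power_mult_distrib t_def)
  have e: "- (((a - mu)^2 - 2 * rho * (a - mu) * (b - mu) + (b - mu)^2) / (2 * sig^2 * (1 - rho^2)))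
     = (- ((a-mu)^2)/(2 * sig^2)) + (- ((b - (mu + rho*(a-mu)))^2) / (2*(sig^2*(1-rho^2))))"
    using s q by (simp add: field_simps) algebra
  have "bvn_density mu sig rho (a,b) = exp (- ((a-mu)^2)/(2 * sig^2)) * exp (- ((b - (mu + rho*(a-mu)))^2) / (2*(sig*t)^2))
       / (2 * pi * sig^2 * t)"
    by (simp only: bvn_density_def split e exp_add st t_def[symmetric])
  also have "\<dots> = (1 / sqrt (2*pi * sig^2) * exp (- ((a-mu)^2)/(2 * sig^2))) *
      (1 / sqrt (2*pi*(sig*t)^2) * exp (- ((b - (mu + rho*(a-mu)))^2) / (2*(sig*t)^2)))"
    unfolding c1 c2 using s t by (simp add: field_simps power2_eq_square)
  finally show ?thesis unfolding normal_density_def t_def .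
qed

lemma bvn_meas[measurable]: "bvn_density mu sig rho \<in> borel_measurable (lborel \<Otimes>\<^sub>M lborel)"
  unfolding bvn_density_def by measurable

lemma bvn_meas2: "bvn_density mu sig rho \<in> borel_measurable (lborel :: (real \<times> real) measure)"
  using bvn_meas[of mu sig rho] by (simp add: lborel_prod)

lemma bvn_nonneg: "sig > 0 \<Longrightarrow> -1 < rho \<Longrightarrow> rho < 1 \<Longrightarrow> bvn_density mu sig rho w \<ge> 0"
  by (cases w) (simp add: bvn_factor)

lemma nn_normal: "s > 0 \<Longrightarrow> (\<integral>\<^sup>+b. ennreal (normal_density m s b) \<partial>lborel) = 1"
  by (subst nn_integral_eq_integral) (auto simp: integrable_normal_density integral_normal_density)

lemma int_lin: "s > 0 \<Longrightarrow> (\<integral>b. normal_density m s b * (a+b) \<partial>lborel) = a + m"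
proof -
  assume s: "s > 0"
  have "(\<integral>b. normal_density m s b * (a+b) \<partial>lborel) = (\<integral>b. a * normal_density m s b + normal_density m s b * b \<partial>lborel)"
    by (simp add: algebra_simps)
  also have "\<dots> = a * (\<integral>b. normal_density m s b \<partial>lborel) + (\<integral>b. normal_density m s b * b \<partial>lborel)"
    using s by (simp add: integrable_normal_density integrable_normal_moment_nz_1)
  also have "\<dots> = a + m" using s by (simp add: integral_normal_density integral_normal_moment_nz_1)
  finally show ?thesis .
qed


context
  fixes mu sig rho :: real
  assumes s: "sig > 0" and r1: "-1 < rho" and r2: "rho < 1"
begin

lemma tau_pos: "sig * sqrt (1 - rho^2) > 0"
proof -
  have "1 - rho^2 > 0" using r1 r2 by (simp add: abs_square_less_1 abs_less_iff)
  then show ?thesis using s by simp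
qed

lemma iter_a: "(\<integral>\<^sup>+a. \<integral>\<^sup>+b. ennreal (bvn_density mu sig rho (a,b) * \<bar>a\<bar>) \<partial>lborel \<partial>lborel) < \<infinity>"
proof -
  have "(\<integral>\<^sup>+a. \<integral>\<^sup>+b. ennreal (bvn_density mu sig rho (a,b) * \<bar>a\<bar>) \<partial>lborel \<partial>lborel)
     = (\<integral>\<^sup>+a. ennreal (normal_density mu sig a * \<bar>a\<bar>) \<partial>lborel)"
  proof (rule nn_integral_cong)
    fix a
    have "(\<integral>\<^sup>+b. ennreal (bvn_density mu sig rho (a,b) * \<bar>a\<bar>) \<partial>lborel)
      = (\<integral>\<^sup>+b. ennreal (normal_density mu sig a * \<bar>a\<bar>) * ennreal (normal_density (mu + rho*(a-mu)) (sig * sqrt(1-rho^2)) b) \<partial>lborel)"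
      using s r1 r2 by (intro nn_integral_cong) (simp add: bvn_factor ennreal_mult[symmetric] mult_ac)
    also have "\<dots> = ennreal (normal_density mu sig a * \<bar>a\<bar>)"
      by (simp add: nn_integral_cmult nn_normal tau_pos)
    finally show "(\<integral>\<^sup>+b. ennreal (bvn_density mu sig rho (a,b) * \<bar>a\<bar>) \<partial>lborel) = ennreal (normal_density mu sig a * \<bar>a\<bar>)" .
  qed
  also have "\<dots> = ennreal (\<integral>a. normal_density mu sig a * \<bar>a\<bar> \<partial>lborel)"
  proof (rule nn_integral_eq_integral)
    show "integrable lborel (\<lambda>a. normal_density mu sig a * \<bar>a\<bar>)"
      using integrable_norm[OF integrable_normal_moment_nz_1[OF s, of mu]] by (simp add: abs_mult)
  qed simp
  finally show ?thesis by simp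
qed

lemma integrable_a: "integrable (lborel \<Otimes>\<^sub>M lborel) (\<lambda>w. bvn_density mu sig rho w * fst w)"
proof (rule integrableI_bounded)
  show "(\<lambda>w. bvn_density mu sig rho w * fst w) \<in> borel_measurable (lborel \<Otimes>\<^sub>M lborel)" by measurable
  have "(\<integral>\<^sup>+w. ennreal (norm (bvn_density mu sig rho w * fst w)) \<partial>(lborel \<Otimes>\<^sub>M lborel))
      = (\<integral>\<^sup>+w. ennreal (bvn_density mu sig rho (fst w, snd w) * \<bar>fst w\<bar>) \<partial>(lborel \<Otimes>\<^sub>M lborel))"
    using bvn_nonneg[OF s r1 r2] by (intro nn_integral_cong) (simp add: abs_mult)
  also have "\<dots> = (\<integral>\<^sup>+a. \<integral>\<^sup>+b. ennreal (bvn_density mu sig rho (a,b) * \<bar>a\<bar>) \<partial>lborel \<partial>lborel)"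
    by (subst lborel.nn_integral_fst[symmetric]) auto
  finally show "(\<integral>\<^sup>+w. ennreal (norm (bvn_density mu sig rho w * fst w)) \<partial>(lborel \<Otimes>\<^sub>M lborel)) < \<infinity>"
    using iter_a by simp
qed

lemma integrable_b: "integrable (lborel \<Otimes>\<^sub>M lborel) (\<lambda>w. bvn_density mu sig rho w * snd w)"
proof (rule integrableI_bounded)
  show "(\<lambda>w. bvn_density mu sig rho w * snd w) \<in> borel_measurable (lborel \<Otimes>\<^sub>M lborel)" by measurable
  have "(\<integral>\<^sup>+w. ennreal (norm (bvn_density mu sig rho w * snd w)) \<partial>(lborel \<Otimes>\<^sub>M lborel))
      = (\<integral>\<^sup>+w. ennreal (bvn_density mu sig rho (fst w, snd w) * \<bar>snd w\<bar>) \<partial>(lborel \<Otimes>\<^sub>M lborel))"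
    using bvn_nonneg[OF s r1 r2] by (intro nn_integral_cong) (simp add: abs_mult)
  also have "\<dots> = (\<integral>\<^sup>+a. \<integral>\<^sup>+b. ennreal (bvn_density mu sig rho (a,b) * \<bar>b\<bar>) \<partial>lborel \<partial>lborel)"
    by (subst lborel.nn_integral_fst[symmetric]) auto
  also have "\<dots> = (\<integral>\<^sup>+b. \<integral>\<^sup>+a. ennreal (bvn_density mu sig rho (a,b) * \<bar>b\<bar>) \<partial>lborel \<partial>lborel)"
    by (rule lborel_pair.Fubini'[symmetric]) measurable
  also have "\<dots> = (\<integral>\<^sup>+b. \<integral>\<^sup>+a. ennreal (bvn_density mu sig rho (b,a) * \<bar>b\<bar>) \<partial>lborel \<partial>lborel)"
    by (simp add: bvn_sym[of mu sig rho _ _])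
  finally show "(\<integral>\<^sup>+w. ennreal (norm (bvn_density mu sig rho w * snd w)) \<partial>(lborel \<Otimes>\<^sub>M lborel)) < \<infinity>"
    using iter_a by simp
qed


definition kf where "kf a = normal_density mu sig a * ((1+rho)*a + (1-rho)*mu)"
definition Gf where "Gf z = (\<integral>a. indicator {z<..} a * kf a \<partial>lborel)"

lemma prod_integral:
  "(\<integral>w. bvn_density mu sig rho w * (indicator {z<..} (fst w) * (fst w + snd w)) \<partial>(lborel \<Otimes>\<^sub>M lborel)) = Gf z"
proof -
  let ?f = "\<lambda>w. bvn_density mu sig rho w * (indicator {z<..} (fst w) * (fst w + snd w))"
  have eq: "?f = (\<lambda>w. indicator ({z<..} \<times> UNIV) w *\<^sub>R (bvn_density mu sig rho w * fst w + bvn_density mu sig rho w * snd w))"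
    by (auto simp: fun_eq_iff indicator_def algebra_simps)
  have int: "integrable (lborel \<Otimes>\<^sub>M lborel) ?f"
    unfolding eq
    by (intro integrable_mult_indicator Bochner_Integration.integrable_add integrable_a integrable_b) auto
  have "(\<integral>w. ?f w \<partial>(lborel \<Otimes>\<^sub>M lborel)) = (\<integral>a. (\<integral>b. ?f (a,b) \<partial>lborel) \<partial>lborel)"
    using lborel_pair.integral_fst'[OF int] by simp
  also have "\<dots> = (\<integral>a. indicator {z<..} a * kf a \<partial>lborel)"
  proof (rule Bochner_Integration.integral_cong[OF refl])
    fix a
    have "(\<integral>b. ?f (a,b) \<partial>lborel) = (\<integral>b. (indicator {z<..} a * normal_density mu sig a) *
            (normal_density (mu + rho*(a-mu)) (sig * sqrt(1-rho^2)) b * (a + b)) \<partial>lborel)"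
      using s r1 r2 by (simp add: bvn_factor mult_ac)
    also have "\<dots> = (indicator {z<..} a * normal_density mu sig a) * (a + (mu + rho*(a-mu)))"
      using int_lin[OF tau_pos] by simp
    also have "\<dots> = indicator {z<..} a * kf a" by (simp add: kf_def algebra_simps)
    finally show "(\<integral>b. ?f (a,b) \<partial>lborel) = indicator {z<..} a * kf a" .
  qed
  finally show ?thesis unfolding Gf_def .
qed

lemma prob_part:
  assumes P: "prob_space M"
    and D: "distributed M lborel (\<lambda>x. (X x, Y x)) (\<lambda>w. ennreal (bvn_density mu sig rho w))"
  shows "measure M {x \<in> space M. X x > z} * cond_exp_event M (\<lambda>x. X x + Y x) {x \<in> space M. X x > z} = Gf z"
proof -
  interpret prob_space M by (rule P)
  let ?B = "{x \<in> space M. X x > z}"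
  have XY: "(\<lambda>x. (X x, Y x)) \<in> borel_measurable M" using distributed_measurable[OF D] by simp
  have Xm: "X \<in> borel_measurable M" using measurable_compose[OF XY borel_measurable_continuous_onI[OF continuous_on_fst[OF continuous_on_id]]] by simp
  have Ym: "Y \<in> borel_measurable M" using measurable_compose[OF XY borel_measurable_continuous_onI[OF continuous_on_snd[OF continuous_on_id]]] by simp
  have Bm: "?B \<in> sets M" using Xm by measurable
  have 1: "measure M ?B * cond_exp_event M (\<lambda>x. X x + Y x) ?B = (\<integral>x. indicator ?B x * (X x + Y x) \<partial>M)"
  proof (cases "measure M ?B = 0")
    case True
    then have "?B \<in> null_sets M" using Bm by (intro null_setsI) (simp_all add: emeasure_eq_measure)
    then have "AE x in M. x \<notin> ?B" by (rule AE_not_in)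
    then have "(\<integral>x. indicator ?B x * (X x + Y x) \<partial>M) = 0"
      by (intro integral_eq_zero_AE) (auto simp: indicator_def)
    then show ?thesis using True by simp
  next
    case False
    then show ?thesis by (simp add: cond_exp_event_def)
  qed
  also have "\<dots> = (\<integral>x. (\<lambda>w. indicator {z<..} (fst w) * (fst w + snd w)) (X x, Y x) \<partial>M)"
    by (intro Bochner_Integration.integral_cong) (auto simp: indicator_def)
  also have "\<dots> = (\<integral>w. bvn_density mu sig rho w * (indicator {z<..} (fst w) * (fst w + snd w)) \<partial>lborel)"
  proof (rule distributed_integral[OF D, symmetric])
    have "(\<lambda>w::real\<times>real. indicator {z<..} (fst w) * (fst w + snd w)) \<in> borel_measurable (lborel \<Otimes>\<^sub>M lborel)"
      by measurable
    then show "(\<lambda>w::real\<times>real. indicator {z<..} (fst w) * (fst w + snd w)) \<in> borel_measurable lborel"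
      by (simp add: lborel_prod)
  qed (auto intro: bvn_nonneg[OF s r1 r2])
  also have "\<dots> = Gf z"
    using prod_integral by (simp add: lborel_prod)
  finally show ?thesis .
qed


lemma kf_cont: "continuous_on S kf"
  unfolding kf_def normal_density_def using s by (intro continuous_intros) auto

lemma kf_integrable: "integrable lborel kf"
proof -
  have "kf = (\<lambda>a. (1+rho) * (normal_density mu sig a * a) + ((1-rho)*mu) * normal_density mu sig a)"
    by (auto simp: fun_eq_iff kf_def algebra_simps)
  then show ?thesis
    using s by (simp add: integrable_normal_moment_nz_1 integrable_normal_density)
qed

lemma kf_ind_integrable: "integrable lborel (\<lambda>a. indicator A a * kf a)" if "A \<in> sets borel"
  using integrable_mult_indicator[OF _ kf_integrable, of A] that by simp

lemma Gf_split: "c \<le> t \<Longrightarrow> Gf c = (LBINT y=c..t. kf y) + Gf t"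
proof -
  assume ct: "c \<le> t"
  have "Gf c = (\<integral>a. indicator {c<..t} a * kf a + indicator {t<..} a * kf a \<partial>lborel)"
    unfolding Gf_def using ct
    by (intro Bochner_Integration.integral_cong) (auto simp: indicator_def)
  also have "\<dots> = (\<integral>a. indicator {c<..t} a * kf a \<partial>lborel) + Gf t"
    unfolding Gf_def by (intro Bochner_Integration.integral_add kf_ind_integrable) auto
  also have "(\<integral>a. indicator {c<..t} a * kf a \<partial>lborel) = (LBINT y=c..t. kf y)"
    using ct by (simp add: interval_integral_Ioc set_lebesgue_integral_def)
  finally show ?thesis .
qed

lemma Gf_deriv: "(Gf has_real_derivative - kf z) (at z)"
proof -
  define c d where "c = z - 1" and "d = z + 1"
  have "((\<lambda>u. LBINT y=c..u. kf y) has_vector_derivative kf z) (at z within {c..d})"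
    by (rule interval_integral_FTC2) (auto simp: c_def d_def kf_cont)
  then have "((\<lambda>u. LBINT y=c..u. kf y) has_real_derivative kf z) (at z)"
    using at_within_Icc_at[of c z d] by (simp add: has_real_derivative_iff_has_vector_derivative c_def d_def)
  then have "((\<lambda>u. Gf c - (LBINT y=c..u. kf y)) has_real_derivative - kf z) (at z)"
    by (intro derivative_eq_intros) auto
  then show ?thesis
  proof (rule has_field_derivative_transform_within_open[where S="{c<..<d}"])
    fix x assume "x \<in> {c<..<d}"
    then show "Gf c - (LBINT y=c..x. kf y) = Gf x" using Gf_split[of c x] by simp
  qed (auto simp: c_def d_def)
qed


lemma kf_eq: "kf a = normal_density mu sig a * (1+rho) * (a - (rho - 1) / (rho + 1) * mu)"
proof -
  have "rho + 1 > 0" using r1 by simp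
  then show ?thesis unfolding kf_def by (simp add: field_simps)
qed

lemma kf_nonpos: "a \<le> (rho - 1) / (rho + 1) * mu \<Longrightarrow> kf a \<le> 0"
  unfolding kf_eq using r1 normal_density_nonneg[of mu sig a]
  by (intro mult_nonneg_nonpos mult_nonneg_nonneg) auto

lemma kf_pos: "a > (rho - 1) / (rho + 1) * mu \<Longrightarrow> kf a > 0"
  unfolding kf_eq using r1 normal_density_pos[OF s, of mu a]
  by (intro mult_pos_pos) auto

lemma kf_nonneg: "a \<ge> (rho - 1) / (rho + 1) * mu \<Longrightarrow> kf a \<ge> 0"
  unfolding kf_eq using r1 normal_density_nonneg[of mu sig a]
  by (intro mult_nonneg_nonneg) auto

lemma Gf_max: "Gf z \<le> Gf ((rho - 1) / (rho + 1) * mu)"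
proof (cases "z \<le> (rho - 1) / (rho + 1) * mu")
  case True
  then show ?thesis
    by (intro deriv_nonneg_imp_mono[OF Gf_deriv]) (auto intro: kf_nonpos)
next
  case False
  then show ?thesis
    by (intro deriv_nonpos_imp_antimono[OF Gf_deriv]) (auto intro: kf_nonneg)
qed

lemma Gf_pos: "Gf ((rho - 1) / (rho + 1) * mu) > 0"
proof -
  let ?z = "(rho - 1) / (rho + 1) * mu"
  have "Gf (?z + 1) \<ge> 0"
    unfolding Gf_def by (intro Bochner_Integration.integral_nonneg) (auto simp: indicator_def intro: less_imp_le[OF kf_pos])
  moreover obtain w where w: "?z < w" "w < ?z + 1" "Gf (?z + 1) - Gf ?z = ((?z + 1) - ?z) * (- kf w)"
    using MVT2[of ?z "?z + 1" Gf "\<lambda>x. - kf x", OF _ Gf_deriv] by auto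
  moreover have "kf w > 0" using kf_pos w by simp
  ultimately show ?thesis by simp
qed

lemma kf0: "mu < 0 \<Longrightarrow> - kf 0 > 0"
  unfolding kf_def using normal_density_pos[OF s, of mu 0] r2
  by (simp add: mult_pos_neg mult_neg_neg)

end


theorem proposition2:
  fixes M :: "'a measure" and A :: "'a \<Rightarrow> 'b" and U V :: "'a \<Rightarrow> real"
    and u v :: 'b and p_u p_v mu sig rho :: real
  assumes "prob_space M"
    and "A \<in> measurable M (count_space UNIV)"
    and "\<forall>x \<in> space M. A x \<in> {u, v}"
    and "measure M {x \<in> space M. A x = u} = p_u"
    and "measure M {x \<in> space M. A x = v} = p_v"
    and "p_u + p_v = 1"
    and "\<forall>a. \<forall>S \<in> sets (borel :: (real \<times> real) measure).
           measure M {x \<in> space M. A x = a \<and> (U x, V x) \<in> S}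
             = measure M {x \<in> space M. A x = a} * measure M {x \<in> space M. (U x, V x) \<in> S}"
    and "distributed M lborel (\<lambda>x. (U x, V x)) (\<lambda>w. ennreal (bvn_density mu sig rho w))"
    and "mu < 0" and "sig > 0"
    and "-1 < rho" and "rho < 1"
  shows "(\<exists>D. (hurdle_perf M A U V u v has_real_derivative D) (at 0) \<and> D > 0)
       \<and> (\<forall>z. hurdle_perf M A U V u v z
               \<le> hurdle_perf M A U V u v ((rho - 1) / (rho + 1) * mu))
       \<and> hurdle_perf M A U V u v ((rho - 1) / (rho + 1) * mu) > 0"
proof -
  note P = assms(1) and D = assms(8) and s = assms(10) and r1 = assms(11) and r2 = assms(12)
  interpret prob_space M by (rule P)
  have D': "distributed M (lborel \<Otimes>\<^sub>M lborel) (\<lambda>x. (U x, V x)) (\<lambda>w. ennreal (bvn_density mu sig rho w))"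
    using D by (simp add: lborel_prod)
  have "distributed M (lborel \<Otimes>\<^sub>M lborel) (\<lambda>x. (V x, U x)) (\<lambda>(x, y). ennreal (bvn_density mu sig rho (y, x)))"
    by (rule distributed_swap[OF _ _ D']) (auto intro: lborel.sigma_finite_measure_axioms)
  moreover have "(\<lambda>(x, y). ennreal (bvn_density mu sig rho (y, x))) = (\<lambda>w. ennreal (bvn_density mu sig rho w))"
    by (auto simp: fun_eq_iff bvn_sym[of mu sig rho])
  ultimately have DV: "distributed M lborel (\<lambda>x. (V x, U x)) (\<lambda>w. ennreal (bvn_density mu sig rho w))"
    by (simp add: lborel_prod)
  have eq: "hurdle_perf M A U V u v z = Gf mu sig rho z" for z
  proof -
    have 1: "measure M {x \<in> space M. U x > z} * cond_exp_event M (\<lambda>x. U x + V x) {x \<in> space M. U x > z} = Gf mu sig rho z"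
      by (rule prob_part[OF s r1 r2 P D])
    have 2: "measure M {x \<in> space M. V x > z} * cond_exp_event M (\<lambda>x. V x + U x) {x \<in> space M. V x > z} = Gf mu sig rho z"
      by (rule prob_part[OF s r1 r2 P DV])
    have 3: "(\<lambda>x. V x + U x) = (\<lambda>x. U x + V x)" by (auto simp: add.commute)
    show ?thesis unfolding hurdle_perf_def assms(4,5)
      using 1 2 3 assms(6) by (simp add: mult.assoc) (metis distrib_right mult_1)
  qed
  show ?thesis
    unfolding eq
    using Gf_deriv[OF s r1 r2, where mu=mu and z=0] kf0[OF s r1 r2 assms(9)] Gf_max[OF s r1 r2] Gf_pos[OF s r1 r2]
    by auto
qed

end
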